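(* Let $\mathbf{CMet}$ be the category of complete generalized metric spaces and nonexpanding maps, enriched over itself. For every $\delta>0$, the hom-functor $\mathbf{CMet}(2_\delta,-)\colon\mathbf{CMet}\to\mathbf{CMet}$ preserves directed colimits of diagrams consisting of convex complete metric spaces and isometries; that is, if $k_i\colon K_i\to K$ ($i\in I$) is a colimit in $\mathbf{CMet}$ of a directed diagram of convex spaces $K_i$ and isometries, then the canonical map $\operatorname{colim}_i\mathbf{CMet}(2_\delta,K_i)\to\mathbf{CMet}(2_\delta,K)$ is an isomorphism in $\mathbf{CMet}$.
   Context: A generalized metric space allows distance $\infty$; morphisms of $\mathbf{CMet}$ are nonexpanding maps $f$ ($d(fx,fy)\le d(x,y)$). The internal hom $\mathbf{CMet}(A,B)$ is the set of nonexpanding maps with the supremum metric $d(f,g)=\sup_x d(fx,gx)$. For $\delta>0$, $2_\delta$ is the two-point metric space whose points are at distance $\delta$. A metric space is convex if for any points $x,y$ there is $z$ with $d(x,z)+d(z,y)=d(x,y)$. A directed colimit of isometries in $\mathbf{CMet}$ is the completion of the union (directed colimit in metric spaces) of the diagram. *)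

theory Defs
  imports Complex_Main "HOL-Library.Extended_Nonnegative_Real" "HOL-Library.FuncSet"
begin

definition gmetric :: "'a set \<Rightarrow> ('a \<Rightarrow> 'a \<Rightarrow> ennreal) \<Rightarrow> bool" where
  "gmetric A d \<longleftrightarrow>
     (\<forall>x\<in>A. \<forall>y\<in>A. (d x y = 0 \<longleftrightarrow> x = y) \<and> d x y = d y x) \<and>
     (\<forall>x\<in>A. \<forall>y\<in>A. \<forall>z\<in>A. d x z \<le> d x y + d y z)"

definition cauchy_in :: "'a set \<Rightarrow> ('a \<Rightarrow> 'a \<Rightarrow> ennreal) \<Rightarrow> (nat \<Rightarrow> 'a) \<Rightarrow> bool" where
  "cauchy_in A d x \<longleftrightarrow> (\<forall>n. x n \<in> A) \<and>
     (\<forall>e::real. e > 0 \<longrightarrow> (\<exists>N. \<forall>m\<ge>N. \<forall>n\<ge>N. d (x m) (x n) < ennreal e))"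

definition converges_in :: "'a set \<Rightarrow> ('a \<Rightarrow> 'a \<Rightarrow> ennreal) \<Rightarrow> (nat \<Rightarrow> 'a) \<Rightarrow> 'a \<Rightarrow> bool" where
  "converges_in A d x l \<longleftrightarrow> l \<in> A \<and>
     (\<forall>e::real. e > 0 \<longrightarrow> (\<exists>N. \<forall>n\<ge>N. d (x n) l < ennreal e))"

definition complete_gmetric :: "'a set \<Rightarrow> ('a \<Rightarrow> 'a \<Rightarrow> ennreal) \<Rightarrow> bool" where
  "complete_gmetric A d \<longleftrightarrow> gmetric A d \<and>
     (\<forall>x. cauchy_in A d x \<longrightarrow> (\<exists>l. converges_in A d x l))"

definition nonexp :: "'a set \<Rightarrow> ('a \<Rightarrow> 'a \<Rightarrow> ennreal) \<Rightarrow> 'b set \<Rightarrow> ('b \<Rightarrow> 'b \<Rightarrow> ennreal) \<Rightarrow> ('a \<Rightarrow> 'b) \<Rightarrow> bool" where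
  "nonexp A dA B dB g \<longleftrightarrow> g \<in> A \<rightarrow> B \<and> (\<forall>x\<in>A. \<forall>y\<in>A. dB (g x) (g y) \<le> dA x y)"

definition isometry :: "'a set \<Rightarrow> ('a \<Rightarrow> 'a \<Rightarrow> ennreal) \<Rightarrow> 'b set \<Rightarrow> ('b \<Rightarrow> 'b \<Rightarrow> ennreal) \<Rightarrow> ('a \<Rightarrow> 'b) \<Rightarrow> bool" where
  "isometry A dA B dB g \<longleftrightarrow> g \<in> A \<rightarrow> B \<and> (\<forall>x\<in>A. \<forall>y\<in>A. dB (g x) (g y) = dA x y)"

definition hom_carrier :: "'a set \<Rightarrow> ('a \<Rightarrow> 'a \<Rightarrow> ennreal) \<Rightarrow> 'b set \<Rightarrow> ('b \<Rightarrow> 'b \<Rightarrow> ennreal) \<Rightarrow> ('a \<Rightarrow> 'b) set" where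
  "hom_carrier A dA B dB = {g \<in> extensional A. nonexp A dA B dB g}"

definition sup_dist :: "'a set \<Rightarrow> ('b \<Rightarrow> 'b \<Rightarrow> ennreal) \<Rightarrow> ('a \<Rightarrow> 'b) \<Rightarrow> ('a \<Rightarrow> 'b) \<Rightarrow> ennreal" where
  "sup_dist A dB = (\<lambda>g h. SUP x\<in>A. dB (g x) (h x))"

definition hom_map :: "'a set \<Rightarrow> ('b \<Rightarrow> 'c) \<Rightarrow> ('a \<Rightarrow> 'b) \<Rightarrow> ('a \<Rightarrow> 'c)" where
  "hom_map A k = (\<lambda>g. restrict (k \<circ> g) A)"

definition two_pt_carrier :: "bool set" where
  "two_pt_carrier = UNIV"

definition two_pt_dist :: "real \<Rightarrow> bool \<Rightarrow> bool \<Rightarrow> ennreal" where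
  "two_pt_dist \<delta> = (\<lambda>x y. if x = y then 0 else ennreal \<delta>)"

definition menger_convex :: "'a set \<Rightarrow> ('a \<Rightarrow> 'a \<Rightarrow> ennreal) \<Rightarrow> bool" where
  "menger_convex A d \<longleftrightarrow>
     (\<forall>x\<in>A. \<forall>y\<in>A. x \<noteq> y \<longrightarrow> (\<exists>z\<in>A. z \<noteq> x \<and> z \<noteq> y \<and> d x z + d z y = d x y))"

definition directed_diagram ::
  "('i \<Rightarrow> 'i \<Rightarrow> bool) \<Rightarrow> 'i set \<Rightarrow> ('i \<Rightarrow> 'a set) \<Rightarrow> ('i \<Rightarrow> 'a \<Rightarrow> 'a \<Rightarrow> ennreal)
    \<Rightarrow> ('i \<Rightarrow> 'i \<Rightarrow> 'a \<Rightarrow> 'a) \<Rightarrow> bool" where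
  "directed_diagram le I S d f \<longleftrightarrow>
     I \<noteq> {} \<and>
     (\<forall>i\<in>I. le i i) \<and>
     (\<forall>i\<in>I. \<forall>j\<in>I. \<forall>l\<in>I. le i j \<longrightarrow> le j l \<longrightarrow> le i l) \<and>
     (\<forall>i\<in>I. \<forall>j\<in>I. \<exists>l\<in>I. le i l \<and> le j l) \<and>
     (\<forall>i\<in>I. complete_gmetric (S i) (d i)) \<and>
     (\<forall>i\<in>I. \<forall>j\<in>I. le i j \<longrightarrow> isometry (S i) (d i) (S j) (d j) (f i j)) \<and>
     (\<forall>i\<in>I. \<forall>x\<in>S i. f i i x = x) \<and>
     (\<forall>i\<in>I. \<forall>j\<in>I. \<forall>l\<in>I. le i j \<longrightarrow> le j l \<longrightarrow> (\<forall>x\<in>S i. f j l (f i j x) = f i l x))"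

text \<open>A colimit cocone in CMet of a directed diagram of isometries: the colimit is the
  completion of the union, i.e. a complete space receiving compatible isometries whose
  joint image is dense.\<close>

definition dir_colim_cocone ::
  "('i \<Rightarrow> 'i \<Rightarrow> bool) \<Rightarrow> 'i set \<Rightarrow> ('i \<Rightarrow> 'a set) \<Rightarrow> ('i \<Rightarrow> 'a \<Rightarrow> 'a \<Rightarrow> ennreal)
    \<Rightarrow> ('i \<Rightarrow> 'i \<Rightarrow> 'a \<Rightarrow> 'a) \<Rightarrow> 'b set \<Rightarrow> ('b \<Rightarrow> 'b \<Rightarrow> ennreal) \<Rightarrow> ('i \<Rightarrow> 'a \<Rightarrow> 'b) \<Rightarrow> bool" where
  "dir_colim_cocone le I S d f T dT k \<longleftrightarrow>
     directed_diagram le I S d f \<and>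
     complete_gmetric T dT \<and>
     (\<forall>i\<in>I. isometry (S i) (d i) T dT (k i)) \<and>
     (\<forall>i\<in>I. \<forall>j\<in>I. le i j \<longrightarrow> (\<forall>x\<in>S i. k j (f i j x) = k i x)) \<and>
     (\<forall>x\<in>T. \<forall>e::real. e > 0 \<longrightarrow> (\<exists>i\<in>I. \<exists>y\<in>S i. dT (k i y) x < ennreal e))"

end

theory Submission
  imports Defs
begin


locale rmet =
  fixes A :: "'a set" and r :: "'a \<Rightarrow> 'a \<Rightarrow> real"
  assumes tri: "\<And>p q s. p\<in>A \<Longrightarrow> q\<in>A \<Longrightarrow> s\<in>A \<Longrightarrow> r p s \<le> r p q + r q s"
    and sym: "\<And>p q. p\<in>A \<Longrightarrow> q\<in>A \<Longrightarrow> r p q = r q p"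
    and zero: "\<And>p q. p\<in>A \<Longrightarrow> q\<in>A \<Longrightarrow> r p q = 0 \<longleftrightarrow> p = q"
    and compl: "\<And>\<sigma>. (\<forall>n. \<sigma> n \<in> A) \<Longrightarrow> (\<forall>e>0. \<exists>N. \<forall>m\<ge>N. \<forall>n\<ge>N. r (\<sigma> m) (\<sigma> n) < e)
        \<Longrightarrow> \<exists>l\<in>A. (\<lambda>n. r (\<sigma> n) l) \<longlonglongrightarrow> 0"
    and menger: "\<And>p q. p\<in>A \<Longrightarrow> q\<in>A \<Longrightarrow> p \<noteq> q \<Longrightarrow> \<exists>u\<in>A. u \<noteq> p \<and> u \<noteq> q \<and> r p u + r u q = r p q"
begin

lemma nonneg: "p\<in>A \<Longrightarrow> q\<in>A \<Longrightarrow> r p q \<ge> 0"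
  using tri[of p q p] sym[of p q] zero[of p p] by auto

lemma self0[simp]: "p\<in>A \<Longrightarrow> r p p = 0" using zero by auto

lemma pos: "p\<in>A \<Longrightarrow> q\<in>A \<Longrightarrow> p \<noteq> q \<Longrightarrow> r p q > 0"
  using nonneg zero by force

lemma dist_cont: "p\<in>A \<Longrightarrow> q\<in>A \<Longrightarrow> q'\<in>A \<Longrightarrow> \<bar>r p q - r p q'\<bar> \<le> r q q'"
  using tri[of p q q'] tri[of p q' q] sym[of q q'] by auto

context
  fixes x y t
  assumes x: "x\<in>A" and y: "y\<in>A" and t0: "0 \<le> t" and tD: "t \<le> r x y"
begin

definition "D = r x y"

definition P :: "'a \<times> 'a \<Rightarrow> bool" where
  "P s \<longleftrightarrow> fst s \<in> A \<and> snd s \<in> A \<and> r x (fst s) + r (fst s) (snd s) + r (snd s) y = D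
     \<and> r x (fst s) \<le> t \<and> t \<le> r x (fst s) + r (fst s) (snd s)"

definition R :: "'a \<times> 'a \<Rightarrow> 'a \<times> 'a \<Rightarrow> bool" where
  "R s s' \<longleftrightarrow> fst s' \<in> A \<and> snd s' \<in> A \<and>
     r (fst s) (fst s') + r (fst s') (snd s') + r (snd s') (snd s) = r (fst s) (snd s)"

definition "gap s = r (fst s) (snd s)"

lemma chain:
  assumes "P s" "R s s'"
  shows "r x (fst s') = r x (fst s) + r (fst s) (fst s')"
    "r (snd s') y = r (snd s') (snd s) + r (snd s) y"
    "r x (fst s') + r (fst s') (snd s') + r (snd s') y = D"
proof -
  obtain w v w' v' where s: "s = (w,v)" "s' = (w',v')" by (cases s, cases s')
  have A: "w\<in>A" "v\<in>A" "w'\<in>A" "v'\<in>A" using assms unfolding P_def R_def s by auto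
  have e1: "r x w + r w v + r v y = D" and e2: "r w w' + r w' v' + r v' v = r w v"
    using assms unfolding P_def R_def s by auto
  have i1: "r x w' \<le> r x w + r w w'" using tri A x by auto
  have i2: "r v' y \<le> r v' v + r v y" using tri A y by auto
  have i3: "r x v' \<le> r x w' + r w' v'" using tri A x by auto
  have i4: "D \<le> r x v' + r v' y" unfolding D_def using tri A x y by auto
  show "r x (fst s') = r x (fst s) + r (fst s) (fst s')"
    "r (snd s') y = r (snd s') (snd s) + r (snd s) y"
    "r x (fst s') + r (fst s') (snd s') + r (snd s') y = D"
    using e1 e2 i1 i2 i3 i4 unfolding s by auto
qed

lemma R_trans:
  assumes "fst s \<in> A" "snd s \<in> A" "R s s'" "R s' s''"
  shows "R s s''"
proof -
  obtain w v w' v' w'' v'' where s: "s = (w,v)" "s' = (w',v')" "s'' = (w'',v'')"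
    by (cases s, cases s', cases s'')
  have A: "w\<in>A" "v\<in>A" "w'\<in>A" "v'\<in>A" "w''\<in>A" "v''\<in>A" using assms unfolding R_def s by auto
  have e1: "r w w' + r w' v' + r v' v = r w v" and e2: "r w' w'' + r w'' v'' + r v'' v' = r w' v'"
    using assms unfolding R_def s by auto
  have "r w w'' \<le> r w w' + r w' w''" "r v'' v \<le> r v'' v' + r v' v"
    "r w v \<le> r w w'' + r w'' v" "r w'' v \<le> r w'' v'' + r v'' v" using tri A by auto
  then show ?thesis using e1 e2 A unfolding R_def s by auto
qed

lemma R_refl: "fst s \<in> A \<Longrightarrow> snd s \<in> A \<Longrightarrow> R s s"
  unfolding R_def by auto

lemma R_gap: "fst s \<in> A \<Longrightarrow> snd s \<in> A \<Longrightarrow> R s s' \<Longrightarrow> gap s' \<le> gap s"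
  unfolding R_def gap_def using nonneg[of "fst s" "fst s'"] nonneg[of "snd s'" "snd s"] by auto

lemma gap_nonneg: "P s \<Longrightarrow> gap s \<ge> 0" unfolding P_def gap_def using nonneg by auto

definition C where "C s = {s'. P s' \<and> R s s'}"

lemma next_ex:
  assumes "P s"
  shows "\<exists>s'\<in>C s. \<forall>s''\<in>C s. gap s - gap s'' \<le> 2 * (gap s - gap s')"
proof -
  define V where "V = (\<lambda>s'. gap s - gap s') ` C s"
  have sC: "s \<in> C s" using assms R_refl unfolding C_def P_def by auto
  have ne: "V \<noteq> {}" using sC V_def by auto
  have bdd: "bdd_above V" unfolding V_def bdd_above_def C_def
    using gap_nonneg by (intro exI[of _ "gap s"]) auto
  show ?thesis
  proof (cases "Sup V \<le> 0")
    case True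
    have "\<forall>s''\<in>C s. gap s - gap s'' \<le> 0"
      using cSup_upper[OF _ bdd] True unfolding V_def by force
    then show ?thesis using sC by (intro bexI[of _ s]) auto
  next
    case False
    then have "Sup V / 2 < Sup V" by auto
    then obtain v where v: "v \<in> V" "Sup V / 2 < v" using less_cSup_iff[OF ne bdd] by auto
    then obtain s' where s': "s' \<in> C s" "v = gap s - gap s'" unfolding V_def by auto
    have "\<forall>s''\<in>C s. gap s - gap s'' \<le> Sup V"
      using cSup_upper[OF _ bdd] unfolding V_def by force
    then show ?thesis using s' v by (intro bexI[of _ s']) auto
  qed
qed

definition nxt where "nxt s = (SOME s'. s'\<in>C s \<and> (\<forall>s''\<in>C s. gap s - gap s'' \<le> 2 * (gap s - gap s')))"

lemma nxt: "P s \<Longrightarrow> nxt s \<in> C s \<and> (\<forall>s''\<in>C s. gap s - gap s'' \<le> 2 * (gap s - gap (nxt s)))"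
  unfolding nxt_def using someI_ex[OF next_ex[unfolded Bex_def]] by blast

definition "sq n = (nxt ^^ n) (x, y)"

lemma P0: "P (x,y)" unfolding P_def D_def using x y tD t0 by auto

lemma sqP: "P (sq n)"
  by (induction n) (auto simp: sq_def P0 dest: nxt simp: C_def)

lemma sqA: "fst (sq n) \<in> A" "snd (sq n) \<in> A" using sqP[of n] unfolding P_def by auto

lemma sqR1: "R (sq n) (sq (Suc n))"
  using nxt[OF sqP[of n]] unfolding C_def sq_def by auto

lemma sqmax: "s'' \<in> C (sq n) \<Longrightarrow> gap (sq n) - gap s'' \<le> 2 * (gap (sq n) - gap (sq (Suc n)))"
  using nxt[OF sqP[of n]] unfolding sq_def by auto

lemma sqR: "n \<le> m \<Longrightarrow> R (sq n) (sq m)"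
proof (induction m rule: dec_induct)
  case base then show ?case using R_refl sqA by auto
next
  case (step m) then show ?case using R_trans[of "sq n" "sq m" "sq (Suc m)"] sqA sqR1 by blast
qed


abbreviation "wq n \<equiv> fst (sq n)"
abbreviation "vq n \<equiv> snd (sq n)"

lemma a_eq: "n \<le> m \<Longrightarrow> r x (wq m) = r x (wq n) + r (wq n) (wq m)"
  using chain(1)[OF sqP sqR] by blast
lemma b_eq: "n \<le> m \<Longrightarrow> r (vq m) y = r (vq m) (vq n) + r (vq n) y"
  using chain(2)[OF sqP sqR] by blast
lemma s_eq: "r x (wq n) + gap (sq n) + r (vq n) y = D"
  using sqP[of n] unfolding P_def gap_def by auto

lemma wdist: "r (wq m) (wq n) = \<bar>r x (wq m) - r x (wq n)\<bar>"
proof (cases "n \<le> m")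
  case True then show ?thesis using a_eq[OF True] nonneg[OF sqA(1) sqA(1)] sym[OF sqA(1) sqA(1), of m n] by auto
next
  case False then have mn: "m \<le> n" by auto
  then show ?thesis using a_eq[OF mn] nonneg[OF sqA(1) sqA(1)] by auto
qed

lemma vdist: "r (vq m) (vq n) = \<bar>r (vq m) y - r (vq n) y\<bar>"
proof (cases "n \<le> m")
  case True then show ?thesis using b_eq[OF True] nonneg[OF sqA(2) sqA(2)] sym[OF sqA(2) sqA(2), of m n] by auto
next
  case False then have mn: "m \<le> n" by auto
  then show ?thesis using b_eq[OF mn] nonneg[OF sqA(2) sqA(2)] sym[OF sqA(2) sqA(2), of m n] by auto
qed

lemma conv_help: fixes f h :: "nat \<Rightarrow> real"
  assumes "\<And>n. \<bar>f n - L\<bar> \<le> h n" "h \<longlonglongrightarrow> 0" shows "f \<longlonglongrightarrow> L"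
  unfolding LIMSEQ_iff
proof (intro allI impI)
  fix e :: real assume "e > 0"
  then obtain N where "\<forall>n\<ge>N. norm (h n - 0) < e" using assms(2) unfolding LIMSEQ_iff by blast
  then show "\<exists>no. \<forall>n\<ge>no. norm (f n - L) < e"
  proof (intro exI[of _ N] allI impI)
    fix n assume "N \<le> n" "\<forall>n\<ge>N. norm (h n - 0) < e"
    then have "\<bar>h n\<bar> < e" by auto
    moreover have "\<bar>f n - L\<bar> \<le> h n" using assms(1) by auto
    moreover have "h n \<le> \<bar>h n\<bar>" by auto
    ultimately show "norm (f n - L) < e" by simp
  qed
qed

lemma main_exists: "\<exists>z\<in>A. r x z = t \<and> r z y = r x y - t"
proof -
  define a where "a n = r x (wq n)" for n
  define b where "b n = r (vq n) y" for n
  define g where "g n = gap (sq n)" for n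
  have sumE: "a n + g n + b n = D" for n using s_eq a_def b_def g_def by auto
  have gnn: "g n \<ge> 0" for n using gap_nonneg[OF sqP] g_def by auto
  have ann: "a n \<ge> 0" "b n \<ge> 0" for n using nonneg sqA x y a_def b_def by auto
  have inca: "incseq a" unfolding incseq_def a_def using a_eq nonneg sqA by fastforce
  have incb: "incseq b" unfolding incseq_def b_def using b_eq nonneg sqA by fastforce
  have at: "a n \<le> t" for n using sqP[of n] unfolding P_def a_def by auto
  have bD: "b n \<le> D" for n using sumE[of n] gnn[of n] ann[of n] by auto
  obtain Aa where Aa: "a \<longlonglongrightarrow> Aa" "\<forall>i. a i \<le> Aa" using incseq_convergent[OF inca, of t] at by blast
  obtain Bb where Bb: "b \<longlonglongrightarrow> Bb" "\<forall>i. b i \<le> Bb" using incseq_convergent[OF incb, of D] bD by blast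
  have "\<exists>N. \<forall>m\<ge>N. \<forall>n\<ge>N. r (wq m) (wq n) < e" if "e > 0" for e
    using LIMSEQ_imp_Cauchy[OF Aa(1)] that unfolding Cauchy_iff wdist a_def by auto
  then obtain ws where ws: "ws \<in> A" "(\<lambda>n. r (wq n) ws) \<longlonglongrightarrow> 0" using compl[of wq] sqA by blast
  have "\<exists>N. \<forall>m\<ge>N. \<forall>n\<ge>N. r (vq m) (vq n) < e" if "e > 0" for e
    using LIMSEQ_imp_Cauchy[OF Bb(1)] that unfolding Cauchy_iff vdist b_def by auto
  then obtain vs where vs: "vs \<in> A" "(\<lambda>n. r (vq n) vs) \<longlonglongrightarrow> 0" using compl[of vq] sqA by blast
  have "a \<longlonglongrightarrow> r x ws"
    by (rule conv_help[OF _ ws(2)]) (use dist_cont[OF x sqA(1) ws(1)] a_def in auto)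
  then have rA: "r x ws = Aa" using Aa(1) LIMSEQ_unique by blast
  have "b \<longlonglongrightarrow> r vs y"
  proof (rule conv_help[OF _ vs(2)])
    fix n show "\<bar>b n - r vs y\<bar> \<le> r (vq n) vs"
      using dist_cont[OF y sqA(2) vs(1), of n] sym[OF y sqA(2), of n] sym[OF y vs(1)] b_def by auto
  qed
  then have rB: "r vs y = Bb" using Bb(1) LIMSEQ_unique by blast
  define G where "G = r ws vs"
  have "g \<longlonglongrightarrow> G"
  proof (rule conv_help)
    fix n
    have "r (wq n) (vq n) \<le> r (wq n) ws + r ws vs + r vs (vq n)"
      using tri[OF sqA(1)[of n] ws(1) sqA(2)[of n]] tri[OF ws(1) vs(1) sqA(2)[of n]] by auto
    moreover have "r ws vs \<le> r (wq n) ws + r (wq n) (vq n) + r (vq n) vs"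
      using tri[OF ws(1) sqA(1)[of n] vs(1)] tri[OF sqA(1)[of n] sqA(2)[of n] vs(1)] sym[OF ws(1) sqA(1)[of n]] by auto
    ultimately show "\<bar>g n - G\<bar> \<le> r (wq n) ws + r (vq n) vs"
      using sym[OF vs(1) sqA(2)] unfolding g_def G_def gap_def by auto
  next
    show "(\<lambda>n. r (wq n) ws + r (vq n) vs) \<longlonglongrightarrow> 0" using tendsto_add[OF ws(2) vs(2)] by simp
  qed
  moreover have "g \<longlonglongrightarrow> D - Aa - Bb"
  proof -
    have "g = (\<lambda>n. D - a n - b n)" using sumE by (auto simp: fun_eq_iff algebra_simps)
    then show ?thesis using Aa(1) Bb(1) by (auto intro!: tendsto_intros)
  qed
  ultimately have GD: "G = D - Aa - Bb" using LIMSEQ_unique by blast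
  have wsn: "r (wq n) ws = Aa - a n" for n
  proof -
    have "(\<lambda>m. r (wq n) (wq m)) \<longlonglongrightarrow> r (wq n) ws"
      by (rule conv_help[OF _ ws(2)]) (use dist_cont[OF sqA(1) sqA(1) ws(1)] in auto)
    moreover have "(\<lambda>m. r (wq n) (wq m)) = (\<lambda>m. \<bar>a m - a n\<bar>)" using wdist a_def by auto
    moreover have "(\<lambda>m. \<bar>a m - a n\<bar>) \<longlonglongrightarrow> \<bar>Aa - a n\<bar>" using Aa(1) by (auto intro!: tendsto_intros)
    ultimately show ?thesis using LIMSEQ_unique Aa(2) by fastforce
  qed
  have vsn: "r vs (vq n) = Bb - b n" for n
  proof -
    have "(\<lambda>m. r (vq n) (vq m)) \<longlonglongrightarrow> r (vq n) vs"
      by (rule conv_help[OF _ vs(2)]) (use dist_cont[OF sqA(2) sqA(2) vs(1)] in auto)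
    moreover have "(\<lambda>m. r (vq n) (vq m)) = (\<lambda>m. \<bar>b m - b n\<bar>)"
      using vdist b_def sym[OF sqA(2) sqA(2)] by (auto simp: fun_eq_iff abs_minus_commute)
    moreover have "(\<lambda>m. \<bar>b m - b n\<bar>) \<longlonglongrightarrow> \<bar>Bb - b n\<bar>" using Bb(1) by (auto intro!: tendsto_intros)
    ultimately show ?thesis using LIMSEQ_unique Bb(2) sym[OF vs(1) sqA(2)] by fastforce
  qed
  define ss where "ss = (ws, vs)"
  have Pss: "P ss"
  proof -
    have "Aa \<le> t" using LIMSEQ_le_const2[OF Aa(1)] at by blast
    moreover have tb: "t \<le> D - b n" for n using sqP[of n] sumE[of n] unfolding P_def a_def g_def gap_def by auto
    moreover have "t \<le> D - Bb"
      by (rule LIMSEQ_le_const[of "\<lambda>n. D - b n"]) (use Bb(1) tb in \<open>auto intro!: tendsto_intros\<close>)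
    ultimately show ?thesis unfolding P_def ss_def using ws vs rA rB GD G_def by auto
  qed
  have Rss: "R (sq n) ss" for n
    unfolding R_def ss_def using ws vs wsn vsn GD G_def sumE[of n] a_def b_def g_def gap_def by auto
  have G0: "G = 0"
  proof (rule ccontr)
    assume "G \<noteq> 0"
    then have "ws \<noteq> vs" using G_def ws vs by auto
    then obtain u where u: "u\<in>A" "u \<noteq> ws" "u \<noteq> vs" "r ws u + r u vs = r ws vs" using menger ws vs by blast
    have p1: "r ws u > 0" "r u vs > 0" using pos u ws vs by auto
    define s' where "s' = (if Aa + r ws u \<le> t then (u, vs) else (ws, u))"
    have Rs': "R ss s'" unfolding s'_def R_def ss_def using u ws vs by auto
    have ch: "r x (fst s') = r x (fst ss) + r (fst ss) (fst s')"
         "r x (fst s') + r (fst s') (snd s') + r (snd s') y = D"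
      using chain[OF Pss Rs'] by auto
    have Ps': "P s'"
    proof (cases "Aa + r ws u \<le> t")
      case True
      then show ?thesis using ch u ws vs Pss rA rB unfolding P_def s'_def ss_def by auto
    next
      case False
      then show ?thesis using ch u ws vs Pss rA rB unfolding P_def s'_def ss_def by auto
    qed
    have gs': "gap s' < G" unfolding s'_def gap_def G_def using u p1 by auto
    have "g n - gap s' \<le> 2 * (g n - g (Suc n))" for n
    proof -
      have "R (sq n) s'" using R_trans[OF sqA(1) sqA(2) Rss Rs'] by blast
      then have "s' \<in> C (sq n)" using Ps' C_def by auto
      then show ?thesis using sqmax g_def by auto
    qed
    moreover have "(\<lambda>n. 2 * (g n - g (Suc n))) \<longlonglongrightarrow> 2 * (G - G)"
      using \<open>g \<longlonglongrightarrow> G\<close> by (intro tendsto_intros) (auto simp: LIMSEQ_Suc)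
    moreover have "(\<lambda>n. g n - gap s') \<longlonglongrightarrow> G - gap s'"
      using \<open>g \<longlonglongrightarrow> G\<close> by (intro tendsto_intros)
    ultimately have "G - gap s' \<le> 2 * (G - G)" using LIMSEQ_le by blast
    then show False using gs' by auto
  qed
  then have "ws = vs" using G_def ws vs zero by auto
  then show ?thesis using Pss G0 rA rB GD G_def unfolding P_def ss_def D_def by (intro bexI[of _ ws]) auto
qed
end
end


lemma ennreal_plus': "0 \<le> a \<Longrightarrow> 0 \<le> b \<Longrightarrow> ennreal a + ennreal b = ennreal (a + b)"
  by (simp add: ennreal_plus)

lemma menger_point:
  assumes cg: "complete_gmetric S d" and mc: "menger_convex S d"
    and x: "x\<in>S" and y: "y\<in>S" and dxy: "d x y = ennreal D" and t0: "0 \<le> t" and tD: "t \<le> D"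
  shows "\<exists>z\<in>S. d x z = ennreal t \<and> d z y = ennreal (D - t)"
proof -
  have gm: "gmetric S d" using cg complete_gmetric_def by auto
  have d0: "\<And>p. p\<in>S \<Longrightarrow> d p p = 0" and dsym: "\<And>p q. p\<in>S \<Longrightarrow> q\<in>S \<Longrightarrow> d p q = d q p"
    and dz: "\<And>p q. p\<in>S \<Longrightarrow> q\<in>S \<Longrightarrow> d p q = 0 \<longleftrightarrow> p = q"
    and dtri: "\<And>p q s. p\<in>S \<Longrightarrow> q\<in>S \<Longrightarrow> s\<in>S \<Longrightarrow> d p s \<le> d p q + d q s"
    using gm unfolding gmetric_def by blast+
  define A where "A = {z\<in>S. d x z < top}"
  define \<rho> where "\<rho> p q = enn2real (d p q)" for p q
  have \<rho>nn: "\<rho> p q \<ge> 0" for p q by (simp add: \<rho>_def)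
  have AS: "A \<subseteq> S" using A_def by auto
  have fin: "d p q < top" if "p\<in>A" "q\<in>A" for p q
  proof -
    have pq: "p \<in> S" "q \<in> S" "d x p < top" "d x q < top" using that A_def by auto
    have "d p q \<le> d p x + d x q" using dtri[of p x q] pq x by blast
    also have "\<dots> = d x p + d x q" using dsym[of p x] pq x by simp
    also have "\<dots> < top" using pq by (simp add: ennreal_add_less_top)
    finally show ?thesis .
  qed
  have de: "d p q = ennreal (\<rho> p q)" if "p\<in>A" "q\<in>A" for p q
    unfolding \<rho>_def using fin[OF that] by simp
  have xA: "x \<in> A" using x d0[OF x] A_def by auto
  have yA: "y \<in> A" using y dxy A_def by auto
  have h1: "\<rho> p s \<le> \<rho> p q + \<rho> q s" if "p\<in>A" "q\<in>A" "s\<in>A" for p q s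
  proof -
    have "d p s \<le> d p q + d q s" using dtri[of p q s] AS that by blast
    then have "ennreal (\<rho> p s) \<le> ennreal (\<rho> p q) + ennreal (\<rho> q s)"
      using de[of p s] de[of p q] de[of q s] that by metis
    also have "\<dots> = ennreal (\<rho> p q + \<rho> q s)" by (rule ennreal_plus'[OF \<rho>nn \<rho>nn])
    finally show ?thesis using \<rho>nn[of p q] \<rho>nn[of q s] by (subst (asm) ennreal_le_iff) auto
  qed
  have h2: "\<rho> p q = \<rho> q p" if "p\<in>A" "q\<in>A" for p q
    unfolding \<rho>_def using dsym[of p q] AS that by (metis subsetD)
  have h3: "\<rho> p q = 0 \<longleftrightarrow> p = q" if pq: "p\<in>A" "q\<in>A" for p q
  proof -
    have "d p q = 0 \<longleftrightarrow> p = q" using dz[of p q] AS pq by blast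
    moreover have "d p q \<noteq> top" using fin[OF pq] by auto
    ultimately show ?thesis unfolding \<rho>_def by (auto simp: enn2real_eq_0_iff)
  qed
  have h4: "\<exists>l\<in>A. (\<lambda>n. \<rho> (\<sigma> n) l) \<longlonglongrightarrow> 0"
    if sA: "\<forall>n. \<sigma> n \<in> A" and ca: "\<forall>e>0. \<exists>N. \<forall>m\<ge>N. \<forall>n\<ge>N. \<rho> (\<sigma> m) (\<sigma> n) < e" for \<sigma>
  proof -
    have "cauchy_in S d \<sigma>" unfolding cauchy_in_def
    proof (intro conjI allI impI)
      fix n show "\<sigma> n \<in> S" using sA AS by auto
    next
      fix e :: real assume "e > 0"
      then obtain N where N: "\<forall>m\<ge>N. \<forall>n\<ge>N. \<rho> (\<sigma> m) (\<sigma> n) < e" using ca by auto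
      have "d (\<sigma> m) (\<sigma> n) < ennreal e" if "m \<ge> N" "n \<ge> N" for m n
      proof -
        have "\<rho> (\<sigma> m) (\<sigma> n) < e" using N that by auto
        then have "ennreal (\<rho> (\<sigma> m) (\<sigma> n)) < ennreal e" using \<rho>nn by (subst ennreal_less_iff) auto
        then show ?thesis using de[of "\<sigma> m" "\<sigma> n"] sA by metis
      qed
      then show "\<exists>N. \<forall>m\<ge>N. \<forall>n\<ge>N. d (\<sigma> m) (\<sigma> n) < ennreal e" by blast
    qed
    then obtain l where l: "converges_in S d \<sigma> l" using cg complete_gmetric_def by blast
    then have lS: "l \<in> S" and lc: "\<And>e. e > 0 \<Longrightarrow> \<exists>N. \<forall>n\<ge>N. d (\<sigma> n) l < ennreal e"
      unfolding converges_in_def by auto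
    obtain N where N: "\<forall>n\<ge>N. d (\<sigma> n) l < ennreal 1" using lc[of 1] by auto
    have "d x l \<le> d x (\<sigma> N) + d (\<sigma> N) l" using dtri[of x "\<sigma> N" l] x lS sA AS by blast
    also have "\<dots> < top"
    proof -
      have "d (\<sigma> N) l < top" using N[rule_format, of N] ennreal_less_top[of 1] by (meson less_trans order_refl)
      moreover have "d x (\<sigma> N) < top" using sA A_def by auto
      ultimately show ?thesis by (simp add: ennreal_add_less_top)
    qed
    finally have lA: "l \<in> A" using lS A_def by auto
    have "(\<lambda>n. \<rho> (\<sigma> n) l) \<longlonglongrightarrow> 0" unfolding LIMSEQ_iff
    proof (intro allI impI)
      fix e :: real assume "e > 0"
      then obtain N where N: "\<forall>n\<ge>N. d (\<sigma> n) l < ennreal e" using lc by auto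
      have "norm (\<rho> (\<sigma> n) l - 0) < e" if "n \<ge> N" for n
      proof -
        have "ennreal (\<rho> (\<sigma> n) l) < ennreal e" using N that de[of "\<sigma> n" l] sA lA by metis
        then have "\<rho> (\<sigma> n) l < e" using \<rho>nn by (subst (asm) ennreal_less_iff) auto
        then show ?thesis using \<rho>nn[of "\<sigma> n" l] by simp
      qed
      then show "\<exists>no. \<forall>n\<ge>no. norm (\<rho> (\<sigma> n) l - 0) < e" by blast
    qed
    then show ?thesis using lA by blast
  qed
  have h5: "\<exists>u\<in>A. u \<noteq> p \<and> u \<noteq> q \<and> \<rho> p u + \<rho> u q = \<rho> p q" if pq: "p\<in>A" "q\<in>A" "p \<noteq> q" for p q
  proof -
    obtain u where u: "u\<in>S" "u\<noteq>p" "u\<noteq>q" "d p u + d u q = d p q"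
      using mc AS pq unfolding menger_convex_def by blast
    have "d p u \<le> d p u + d u q" by simp
    then have "d p u \<le> d p q" using u(4) by simp
    then have pu: "d p u < top" using fin[OF pq(1,2)] by auto
    have "d x u \<le> d x p + d p u" using dtri[of x p u] x u pq AS by blast
    also have "\<dots> < top" using pu pq A_def by (simp add: ennreal_add_less_top)
    finally have uA: "u \<in> A" using u A_def by auto
    have "ennreal (\<rho> p u) + ennreal (\<rho> u q) = ennreal (\<rho> p q)"
      using u(4) de[OF pq(1) uA] de[OF uA pq(2)] de[OF pq(1,2)] by metis
    then have "ennreal (\<rho> p u + \<rho> u q) = ennreal (\<rho> p q)" by (simp only: ennreal_plus'[OF \<rho>nn \<rho>nn])
    then have "\<rho> p u + \<rho> u q = \<rho> p q" using \<rho>nn by (subst (asm) ennreal_inj) (auto intro: add_nonneg_nonneg)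
    then show ?thesis using uA u by blast
  qed
  interpret rmet A \<rho>
    apply unfold_locales
    using h1 apply blast
    using h2 apply blast
    using h3 apply blast
    using h4 apply blast
    using h5 apply blast
    done
  have D0: "0 \<le> D" using t0 tD by auto
  have rxy: "\<rho> x y = D" using dxy D0 \<rho>_def by auto
  obtain z where z: "z\<in>A" "\<rho> x z = t" "\<rho> z y = \<rho> x y - t"
    using main_exists[OF xA yA t0] rxy tD by auto
  have "d x z = ennreal t" using de[OF xA z(1)] z(2) by simp
  moreover have "d z y = ennreal (D - t)" using de[OF z(1) yA] z(3) rxy by simp
  ultimately show ?thesis using z(1) AS by auto
qed



lemma hom_char:
  assumes "gmetric A dA"
  shows "g \<in> hom_carrier two_pt_carrier (two_pt_dist \<delta>) A dA \<longleftrightarrow>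
     g True \<in> A \<and> g False \<in> A \<and> dA (g True) (g False) \<le> ennreal \<delta>"
proof -
  have d0: "\<And>p. p\<in>A \<Longrightarrow> dA p p = 0" and ds: "\<And>p q. p\<in>A \<Longrightarrow> q\<in>A \<Longrightarrow> dA p q = dA q p"
    using assms unfolding gmetric_def by blast+
  have "g \<in> UNIV \<rightarrow> A \<longleftrightarrow> g True \<in> A \<and> g False \<in> A" by (auto simp: Pi_iff all_bool_eq)
  moreover have "g True \<in> A \<Longrightarrow> g False \<in> A \<Longrightarrow> (\<forall>x y. dA (g x) (g y) \<le> two_pt_dist \<delta> x y) \<longleftrightarrow> dA (g True) (g False) \<le> ennreal \<delta>"
    unfolding two_pt_dist_def using d0 ds[of "g True" "g False"] by (auto simp: all_bool_eq)
  ultimately show ?thesis unfolding hom_carrier_def nonexp_def two_pt_carrier_def by auto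
qed

lemma sup_char: "sup_dist two_pt_carrier dB g h = max (dB (g True) (h True)) (dB (g False) (h False))"
  unfolding sup_dist_def two_pt_carrier_def UNIV_bool by (simp add: sup_max max.commute)

lemma hom_map_eq: "hom_map two_pt_carrier k g = (\<lambda>b. k (g b))"
  unfolding hom_map_def two_pt_carrier_def by auto

lemma ennreal_tri3: "(a::ennreal) \<le> b + c \<Longrightarrow> c \<le> c1 + c2 \<Longrightarrow> a \<le> b + c1 + c2"
  by (metis add.assoc add_left_mono order_trans)

lemma hom_complete:
  assumes cg: "complete_gmetric A dA"
  shows "complete_gmetric (hom_carrier two_pt_carrier (two_pt_dist \<delta>) A dA) (sup_dist two_pt_carrier dA)"
proof -
  have gm: "gmetric A dA" using cg unfolding complete_gmetric_def by auto
  have d0: "\<And>p. p\<in>A \<Longrightarrow> dA p p = 0" and ds: "\<And>p q. p\<in>A \<Longrightarrow> q\<in>A \<Longrightarrow> dA p q = dA q p"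
    and dz: "\<And>p q. p\<in>A \<Longrightarrow> q\<in>A \<Longrightarrow> dA p q = 0 \<longleftrightarrow> p = q"
    and dt: "\<And>p q s. p\<in>A \<Longrightarrow> q\<in>A \<Longrightarrow> s\<in>A \<Longrightarrow> dA p s \<le> dA p q + dA q s"
    using gm unfolding gmetric_def by blast+
  let ?H = "hom_carrier two_pt_carrier (two_pt_dist \<delta>) A dA"
  let ?D = "sup_dist two_pt_carrier dA"
  note hc = hom_char[OF gm] and sc = sup_char
  have "gmetric ?H ?D" unfolding gmetric_def
  proof (intro conjI ballI)
    fix g h assume g: "g \<in> ?H" and h: "h \<in> ?H"
    then have A: "g True \<in> A" "g False \<in> A" "h True \<in> A" "h False \<in> A" using hc by auto
    have "?D g h = 0 \<longleftrightarrow> g True = h True \<and> g False = h False"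
      unfolding sc using dz[OF A(1) A(3)] dz[OF A(2) A(4)] by (auto simp: max_def)
    also have "\<dots> \<longleftrightarrow> g = h" by (auto simp: fun_eq_iff all_bool_eq)
    finally show "?D g h = 0 \<longleftrightarrow> g = h" .
    show "?D g h = ?D h g" unfolding sc using ds[OF A(1) A(3)] ds[OF A(2) A(4)] by simp
  next
    fix g h l assume g: "g \<in> ?H" and h: "h \<in> ?H" and l: "l \<in> ?H"
    then have A: "g True \<in> A" "g False \<in> A" "h True \<in> A" "h False \<in> A" "l True \<in> A" "l False \<in> A"
      using hc by auto
    have "dA (g b) (l b) \<le> ?D g h + ?D h l" for b
    proof -
      have "dA (g b) (l b) \<le> dA (g b) (h b) + dA (h b) (l b)" using dt A by (cases b) auto
      also have "\<dots> \<le> ?D g h + ?D h l" unfolding sc by (intro add_mono) (cases b; simp)+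
      finally show ?thesis .
    qed
    then show "?D g l \<le> ?D g h + ?D h l" unfolding sc[of dA g l] by (metis max.boundedI)
  qed
  moreover have "\<exists>L. converges_in ?H ?D \<sigma> L" if c: "cauchy_in ?H ?D \<sigma>" for \<sigma>
  proof -
    have sH: "\<And>n. \<sigma> n True \<in> A" "\<And>n. \<sigma> n False \<in> A" "\<And>n. dA (\<sigma> n True) (\<sigma> n False) \<le> ennreal \<delta>"
      using c hc unfolding cauchy_in_def by auto
    have cb: "cauchy_in A dA (\<lambda>n. \<sigma> n b)" for b
      unfolding cauchy_in_def
    proof (intro conjI allI impI)
      fix n show "\<sigma> n b \<in> A" using sH by (cases b) auto
    next
      fix e :: real assume "e > 0"
      then obtain N where N: "\<forall>m\<ge>N. \<forall>n\<ge>N. ?D (\<sigma> m) (\<sigma> n) < ennreal e" using c unfolding cauchy_in_def by blast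
      show "\<exists>N. \<forall>m\<ge>N. \<forall>n\<ge>N. dA (\<sigma> m b) (\<sigma> n b) < ennreal e"
        using N unfolding sc by (intro exI[of _ N]) (cases b; auto)
    qed
    obtain l1 where l1: "converges_in A dA (\<lambda>n. \<sigma> n True) l1" using cb cg unfolding complete_gmetric_def by blast
    obtain l2 where l2: "converges_in A dA (\<lambda>n. \<sigma> n False) l2" using cb cg unfolding complete_gmetric_def by blast
    define L where "L = (\<lambda>b. if b then l1 else l2)"
    have lA: "l1 \<in> A" "l2 \<in> A" using l1 l2 unfolding converges_in_def by auto
    have ev: "\<exists>N. \<forall>n\<ge>N. dA (\<sigma> n True) l1 < ennreal e \<and> dA (\<sigma> n False) l2 < ennreal e" if e0: "e > 0" for e
    proof -
      obtain N1 where "\<forall>n\<ge>N1. dA (\<sigma> n True) l1 < ennreal e" using l1 e0 unfolding converges_in_def by blast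
      moreover obtain N2 where "\<forall>n\<ge>N2. dA (\<sigma> n False) l2 < ennreal e" using l2 e0 unfolding converges_in_def by blast
      ultimately show ?thesis by (intro exI[of _ "max N1 N2"]) auto
    qed
    have "dA l1 l2 \<le> ennreal \<delta>"
    proof (rule ennreal_le_epsilon)
      fix e :: real assume "0 < e"
      then obtain N where N: "dA (\<sigma> N True) l1 < ennreal (e/2)" "dA (\<sigma> N False) l2 < ennreal (e/2)"
        using ev[of "e/2"] by auto
      have "dA l1 l2 \<le> dA l1 (\<sigma> N True) + dA (\<sigma> N True) l2" using dt lA sH by blast
      moreover have "dA (\<sigma> N True) l2 \<le> dA (\<sigma> N True) (\<sigma> N False) + dA (\<sigma> N False) l2" using dt lA sH by blast
      ultimately have "dA l1 l2 \<le> dA l1 (\<sigma> N True) + dA (\<sigma> N True) (\<sigma> N False) + dA (\<sigma> N False) l2"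
        by (rule ennreal_tri3)
      also have "\<dots> \<le> ennreal (e/2) + ennreal \<delta> + ennreal (e/2)"
        using N sH(3)[of N] ds[OF lA(1) sH(1)[of N]] by (intro add_mono) auto
      also have "\<dots> = ennreal \<delta> + ennreal e"
      proof -
        have "ennreal e = ennreal (e/2) + ennreal (e/2)" using ennreal_plus[of "e/2" "e/2"] \<open>0<e\<close> by simp
        then show ?thesis by (simp add: ac_simps)
      qed
      finally show "dA l1 l2 \<le> ennreal \<delta> + ennreal e" .
    qed
    then have LH: "L \<in> ?H" using hc lA unfolding L_def by auto
    have "converges_in ?H ?D \<sigma> L" unfolding converges_in_def
    proof (intro conjI allI impI)
      show "L \<in> ?H" by (fact LH)
    next
      fix e :: real assume "e > 0"
      then obtain N where "\<forall>n\<ge>N. dA (\<sigma> n True) l1 < ennreal e \<and> dA (\<sigma> n False) l2 < ennreal e" using ev by blast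
      then show "\<exists>N. \<forall>n\<ge>N. ?D (\<sigma> n) L < ennreal e" unfolding sc L_def by (intro exI[of _ N]) auto
    qed
    then show ?thesis by blast
  qed
  ultimately show ?thesis unfolding complete_gmetric_def by blast
qed

lemma hom_iso:
  assumes "gmetric A dA" "gmetric B dB" "isometry A dA B dB k"
  shows "isometry (hom_carrier two_pt_carrier (two_pt_dist \<delta>) A dA) (sup_dist two_pt_carrier dA)
                  (hom_carrier two_pt_carrier (two_pt_dist \<delta>) B dB) (sup_dist two_pt_carrier dB)
                  (hom_map two_pt_carrier k)"
proof -
  have k: "\<And>p. p \<in> A \<Longrightarrow> k p \<in> B" "\<And>p q. p\<in>A \<Longrightarrow> q\<in>A \<Longrightarrow> dB (k p) (k q) = dA p q"
    using assms(3) unfolding isometry_def by auto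
  show ?thesis unfolding isometry_def hom_map_eq
    using k by (auto simp: hom_char[OF assms(1)] hom_char[OF assms(2)] sup_char)
qed



lemma fin_real: "(a::ennreal) < ennreal c \<Longrightarrow> \<exists>r. 0 \<le> r \<and> r < c \<and> a = ennreal r"
  by (metis enn2real_nonneg ennreal_enn2real ennreal_less_top enn2real_less_iff less_trans)

lemma density:
  assumes \<delta>: "\<delta> > 0" and C: "dir_colim_cocone le I S d f T dT k"
    and conv: "\<forall>i\<in>I. menger_convex (S i) (d i)"
    and g: "g \<in> hom_carrier two_pt_carrier (two_pt_dist \<delta>) T dT" and e: "e > 0"
  shows "\<exists>i\<in>I. \<exists>h\<in>hom_carrier two_pt_carrier (two_pt_dist \<delta>) (S i) (d i).
           sup_dist two_pt_carrier dT (hom_map two_pt_carrier (k i) h) g < ennreal e"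
proof -
  have DD: "directed_diagram le I S d f" and cT: "complete_gmetric T dT"
    and kiso: "\<And>i. i\<in>I \<Longrightarrow> isometry (S i) (d i) T dT (k i)"
    and kcomp: "\<And>i j x. i\<in>I \<Longrightarrow> j\<in>I \<Longrightarrow> le i j \<Longrightarrow> x\<in>S i \<Longrightarrow> k j (f i j x) = k i x"
    and dens: "\<And>x e. x\<in>T \<Longrightarrow> e > 0 \<Longrightarrow> \<exists>i\<in>I. \<exists>y\<in>S i. dT (k i y) x < ennreal e"
    using C unfolding dir_colim_cocone_def by blast+
  have dirI: "\<And>i j. i\<in>I \<Longrightarrow> j\<in>I \<Longrightarrow> \<exists>l\<in>I. le i l \<and> le j l"
    and cS: "\<And>i. i\<in>I \<Longrightarrow> complete_gmetric (S i) (d i)"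
    and fiso: "\<And>i j. i\<in>I \<Longrightarrow> j\<in>I \<Longrightarrow> le i j \<Longrightarrow> isometry (S i) (d i) (S j) (d j) (f i j)"
    using DD unfolding directed_diagram_def by blast+
  have gT: "gmetric T dT" using cT unfolding complete_gmetric_def by blast
  have dTs: "\<And>p q. p\<in>T \<Longrightarrow> q\<in>T \<Longrightarrow> dT p q = dT q p"
    and dTt: "\<And>p q s. p\<in>T \<Longrightarrow> q\<in>T \<Longrightarrow> s\<in>T \<Longrightarrow> dT p s \<le> dT p q + dT q s"
    using gT unfolding gmetric_def by blast+
  define a where "a = g True"
  define b where "b = g False"
  have ab: "a \<in> T" "b \<in> T" "dT a b \<le> ennreal \<delta>" using g hom_char[OF gT] a_def b_def by auto
  define \<eta> where "\<eta> = e / 3"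
  have \<eta>: "\<eta> > 0" using e \<eta>_def by auto
  obtain i1 y1 where i1: "i1 \<in> I" "y1 \<in> S i1" "dT (k i1 y1) a < ennreal \<eta>" using dens[OF ab(1) \<eta>] by blast
  obtain i2 y2 where i2: "i2 \<in> I" "y2 \<in> S i2" "dT (k i2 y2) b < ennreal \<eta>" using dens[OF ab(2) \<eta>] by blast
  obtain l where l: "l \<in> I" "le i1 l" "le i2 l" using dirI[OF i1(1) i2(1)] by blast
  define x where "x = f i1 l y1"
  define y where "y = f i2 l y2"
  have xy: "x \<in> S l" "y \<in> S l" using fiso[OF i1(1) l(1) l(2)] fiso[OF i2(1) l(1) l(3)] i1 i2
    unfolding isometry_def x_def y_def by auto
  have kx: "k l x = k i1 y1" using kcomp[OF i1(1) l(1) l(2) i1(2)] x_def by simp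
  have ky: "k l y = k i2 y2" using kcomp[OF i2(1) l(1) l(3) i2(2)] y_def by simp
  have kl: "\<And>p. p \<in> S l \<Longrightarrow> k l p \<in> T" "\<And>p q. p\<in>S l \<Longrightarrow> q\<in>S l \<Longrightarrow> dT (k l p) (k l q) = d l p q"
    using kiso[OF l(1)] unfolding isometry_def by auto
  have gl: "gmetric (S l) (d l)" using cS[OF l(1)] unfolding complete_gmetric_def by blast
  obtain r1 where r1: "0 \<le> r1" "r1 < \<eta>" "dT (k l x) a = ennreal r1" using fin_real i1(3) kx by metis
  obtain r2 where r2: "0 \<le> r2" "r2 < \<eta>" "dT (k l y) b = ennreal r2" using fin_real i2(3) ky by metis
  obtain rab where rab: "0 \<le> rab" "rab \<le> \<delta>" "dT a b = ennreal rab"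
  proof -
    have "dT a b < ennreal (\<delta> + 1)" using ab(3) \<delta> by (meson ennreal_less_iff le_less_trans less_add_one order_less_imp_le)
    then obtain r where r: "0 \<le> r" "r < \<delta> + 1" "dT a b = ennreal r" using fin_real by blast
    then have "r \<le> \<delta>" using ab(3) \<delta> by simp
    then show ?thesis using r that by blast
  qed
  have "d l x y = dT (k l x) (k l y)" using kl(2)[OF xy] by simp
  also have "\<dots> \<le> dT (k l x) a + dT a (k l y)" using dTt kl(1) xy ab by blast
  also have "dT a (k l y) \<le> dT a b + dT b (k l y)" using dTt kl(1) xy ab by blast
  also have "dT b (k l y) = ennreal r2" using r2(3) dTs[OF kl(1)[OF xy(2)] ab(2)] by simp
  finally have "d l x y \<le> ennreal r1 + (ennreal rab + ennreal r2)" using r1(3) rab(3) by (simp add: add_mono)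
  also have "\<dots> = ennreal (r1 + rab + r2)" using r1 r2 rab by (simp add: ac_simps)
  finally have dxy: "d l x y \<le> ennreal (r1 + rab + r2)" .
  then obtain D where D: "0 \<le> D" "D \<le> r1 + rab + r2" "d l x y = ennreal D"
  proof -
    have "d l x y < ennreal (r1 + rab + r2 + 1)" using dxy r1 r2 rab
      by (meson ennreal_less_iff le_less_trans less_add_one add_nonneg_nonneg)
    then obtain r where r: "0 \<le> r" "d l x y = ennreal r" using fin_real by blast
    have "ennreal r \<le> ennreal (r1 + rab + r2)" using dxy r(2) by metis
    then have "r \<le> r1 + rab + r2" using r1 r2 rab by (subst (asm) ennreal_le_iff) auto
    then show ?thesis using r that by blast
  qed
  show ?thesis
  proof (cases "D \<le> \<delta>")
    case True
    define h where "h = (\<lambda>c::bool. if c then x else y)"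
    have hH: "h \<in> hom_carrier two_pt_carrier (two_pt_dist \<delta>) (S l) (d l)"
      unfolding hom_char[OF gl] h_def using xy D True by simp
    have "sup_dist two_pt_carrier dT (hom_map two_pt_carrier (k l) h) g = max (ennreal r1) (ennreal r2)"
      unfolding sup_char hom_map_eq h_def using r1 r2 a_def b_def by simp
    also have "\<dots> < ennreal e" using r1 r2 \<eta>_def e by (simp add: ennreal_less_iff)
    finally show ?thesis using l hH by blast
  next
    case False
    obtain z where z: "z \<in> S l" "d l x z = ennreal \<delta>" "d l z y = ennreal (D - \<delta>)"
      using menger_point[OF cS[OF l(1)] conv[rule_format, OF l(1)] xy D(3), of \<delta>] \<delta> False by auto
    define h where "h = (\<lambda>c::bool. if c then x else z)"
    have hH: "h \<in> hom_carrier two_pt_carrier (two_pt_dist \<delta>) (S l) (d l)"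
      unfolding hom_char[OF gl] h_def using xy z by simp
    have "dT (k l z) b \<le> dT (k l z) (k l y) + dT (k l y) b" using dTt kl(1) xy z ab by blast
    also have "\<dots> = ennreal (D - \<delta>) + ennreal r2" using kl(2)[OF z(1) xy(2)] z(3) r2(3) by simp
    also have "\<dots> = ennreal (D - \<delta> + r2)" using False r2 by simp
    finally have zb: "dT (k l z) b \<le> ennreal (D - \<delta> + r2)" .
    have "D - \<delta> + r2 < e" using D r1 r2 rab \<eta>_def by linarith
    then have "ennreal (D - \<delta> + r2) < ennreal e" using False r2 by (subst ennreal_less_iff) auto
    then have "dT (k l z) b < ennreal e" using zb by (rule le_less_trans[rotated])
    moreover have "dT (k l x) a < ennreal e" using r1 \<eta>_def e by (simp add: ennreal_less_iff)
    ultimately have "sup_dist two_pt_carrier dT (hom_map two_pt_carrier (k l) h) g < ennreal e"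
      unfolding sup_char hom_map_eq h_def a_def b_def by simp
    then show ?thesis using l hH by blast
  qed
qed


theorem mainTheorem18:
  fixes le :: "'i \<Rightarrow> 'i \<Rightarrow> bool" and I :: "'i set"
    and S :: "'i \<Rightarrow> 'a set" and d :: "'i \<Rightarrow> 'a \<Rightarrow> 'a \<Rightarrow> ennreal"
    and f :: "'i \<Rightarrow> 'i \<Rightarrow> 'a \<Rightarrow> 'a"
    and T :: "'b set" and dT :: "'b \<Rightarrow> 'b \<Rightarrow> ennreal" and k :: "'i \<Rightarrow> 'a \<Rightarrow> 'b"
    and \<delta> :: real
  assumes "\<delta> > 0"
    and "dir_colim_cocone le I S d f T dT k"
    and "\<forall>i\<in>I. menger_convex (S i) (d i)"
  shows "dir_colim_cocone le I
           (\<lambda>i. hom_carrier two_pt_carrier (two_pt_dist \<delta>) (S i) (d i))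
           (\<lambda>i. sup_dist two_pt_carrier (d i))
           (\<lambda>i j. hom_map two_pt_carrier (f i j))
           (hom_carrier two_pt_carrier (two_pt_dist \<delta>) T dT)
           (sup_dist two_pt_carrier dT)
           (\<lambda>i. hom_map two_pt_carrier (k i))"
proof -
  note C = assms(2)
  have DD: "directed_diagram le I S d f" and cT: "complete_gmetric T dT"
    and kiso: "\<And>i. i\<in>I \<Longrightarrow> isometry (S i) (d i) T dT (k i)"
    and kcomp: "\<And>i j x. i\<in>I \<Longrightarrow> j\<in>I \<Longrightarrow> le i j \<Longrightarrow> x\<in>S i \<Longrightarrow> k j (f i j x) = k i x"
    using C unfolding dir_colim_cocone_def by blast+
  have ne: "I \<noteq> {}" and rf: "\<forall>i\<in>I. le i i" and tr: "\<forall>i\<in>I. \<forall>j\<in>I. \<forall>l\<in>I. le i j \<longrightarrow> le j l \<longrightarrow> le i l"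
    and dirI: "\<forall>i\<in>I. \<forall>j\<in>I. \<exists>l\<in>I. le i l \<and> le j l"
    and cS: "\<And>i. i\<in>I \<Longrightarrow> complete_gmetric (S i) (d i)"
    and fiso: "\<And>i j. i\<in>I \<Longrightarrow> j\<in>I \<Longrightarrow> le i j \<Longrightarrow> isometry (S i) (d i) (S j) (d j) (f i j)"
    and fid: "\<And>i x. i\<in>I \<Longrightarrow> x\<in>S i \<Longrightarrow> f i i x = x"
    and fcomp: "\<And>i j l x. i\<in>I \<Longrightarrow> j\<in>I \<Longrightarrow> l\<in>I \<Longrightarrow> le i j \<Longrightarrow> le j l \<Longrightarrow> x\<in>S i \<Longrightarrow> f j l (f i j x) = f i l x"
    using DD unfolding directed_diagram_def by blast+
  have gS: "\<And>i. i\<in>I \<Longrightarrow> gmetric (S i) (d i)" using cS unfolding complete_gmetric_def by blast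
  have gT: "gmetric T dT" using cT unfolding complete_gmetric_def by blast
  have mem: "\<And>i g c. i\<in>I \<Longrightarrow> g \<in> hom_carrier two_pt_carrier (two_pt_dist \<delta>) (S i) (d i) \<Longrightarrow> g c \<in> S i"
  proof -
    fix i g c assume "i\<in>I" "g \<in> hom_carrier two_pt_carrier (two_pt_dist \<delta>) (S i) (d i)"
    then show "g c \<in> S i" using hom_char[OF gS] by (cases c) auto
  qed
  show ?thesis
    unfolding dir_colim_cocone_def directed_diagram_def
  proof (intro conjI ballI impI allI)
    show "I \<noteq> {}" by (fact ne)
  next
    fix i assume "i\<in>I" then show "le i i" using rf by blast
  next
    fix i j l assume "i\<in>I" "j\<in>I" "l\<in>I" "le i j" "le j l" then show "le i l" using tr by blast
  next
    fix i j assume "i\<in>I" "j\<in>I" then show "\<exists>l\<in>I. le i l \<and> le j l" using dirI by blast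
  next
    fix i assume "i\<in>I" then show "complete_gmetric (hom_carrier two_pt_carrier (two_pt_dist \<delta>) (S i) (d i)) (sup_dist two_pt_carrier (d i))"
      using hom_complete cS by blast
  next
    fix i j assume "i\<in>I" "j\<in>I" "le i j"
    then show "isometry (hom_carrier two_pt_carrier (two_pt_dist \<delta>) (S i) (d i)) (sup_dist two_pt_carrier (d i))
         (hom_carrier two_pt_carrier (two_pt_dist \<delta>) (S j) (d j)) (sup_dist two_pt_carrier (d j)) (hom_map two_pt_carrier (f i j))"
      using hom_iso gS fiso by blast
  next
    fix i g assume i: "i\<in>I" and g: "g \<in> hom_carrier two_pt_carrier (two_pt_dist \<delta>) (S i) (d i)"
    show "hom_map two_pt_carrier (f i i) g = g" unfolding hom_map_eq using fid[OF i mem[OF i g]] by auto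
  next
    fix i j l g assume i: "i\<in>I" "j\<in>I" "l\<in>I" "le i j" "le j l"
      and g: "g \<in> hom_carrier two_pt_carrier (two_pt_dist \<delta>) (S i) (d i)"
    show "hom_map two_pt_carrier (f j l) (hom_map two_pt_carrier (f i j) g) = hom_map two_pt_carrier (f i l) g"
      unfolding hom_map_eq using fcomp[OF i mem[OF i(1) g]] by auto
  next
    show "complete_gmetric (hom_carrier two_pt_carrier (two_pt_dist \<delta>) T dT) (sup_dist two_pt_carrier dT)"
      using hom_complete cT by blast
  next
    fix i assume "i\<in>I"
    then show "isometry (hom_carrier two_pt_carrier (two_pt_dist \<delta>) (S i) (d i)) (sup_dist two_pt_carrier (d i))
         (hom_carrier two_pt_carrier (two_pt_dist \<delta>) T dT) (sup_dist two_pt_carrier dT) (hom_map two_pt_carrier (k i))"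
      using hom_iso gS gT kiso by blast
  next
    fix i j g assume i: "i\<in>I" "j\<in>I" "le i j" and g: "g \<in> hom_carrier two_pt_carrier (two_pt_dist \<delta>) (S i) (d i)"
    show "hom_map two_pt_carrier (k j) (hom_map two_pt_carrier (f i j) g) = hom_map two_pt_carrier (k i) g"
      unfolding hom_map_eq using kcomp[OF i mem[OF i(1) g]] by auto
  next
    fix g e assume "g \<in> hom_carrier two_pt_carrier (two_pt_dist \<delta>) T dT" "(0::real) < e"
    then show "\<exists>i\<in>I. \<exists>h\<in>hom_carrier two_pt_carrier (two_pt_dist \<delta>) (S i) (d i).
           sup_dist two_pt_carrier dT (hom_map two_pt_carrier (k i) h) g < ennreal e"
      using density[OF assms] by blast
  qed
qed

end
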